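(* Let $(a,b,c,d)\in\mathbb{Z}_{\ge0}^4$ and let $t$ be a positive integer with $t\le q_0-1$. Then $aq+b(q+q_0)+c(q+2q_0)+d(q+2q_0+1)\le t(q+2q_0+1)$ if and only if $a+b+c+d\le t$.
   Context: $n\ge2$ is an integer, $q_0=2^n$ and $q=2q_0^2$. *)

theory Defs
  imports Main
begin

end

theory Submission
  imports Defs
begin

theorem lemma3p1:
  fixes n a b c d t q0 q :: nat
  assumes "n \<ge> 2"
    and "q0 = 2 ^ n"
    and "q = 2 * q0 ^ 2"
    and "0 < t" and "t \<le> q0 - 1"
  shows "a * q + b * (q + q0) + c * (q + 2 * q0) + d * (q + 2 * q0 + 1) \<le> t * (q + 2 * q0 + 1)
         \<longleftrightarrow> a + b + c + d \<le> t"
proof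
  define s where "s = a + b + c + d"
  have q0pos: "q0 \<ge> 1" using assms(2) by simp
  have key: "t * (2 * q0 + 1) < q"
  proof -
    have "t + 1 \<le> q0" using assms(5) q0pos by linarith
    hence "(t+1) * (2*q0+1) \<le> q0 * (2*q0+1)" by (rule mult_right_mono) simp
    hence "t * (2 * q0 + 1) + 2*q0 + 1 \<le> 2*q0*q0 + q0" by (simp add: algebra_simps)
    thus ?thesis using assms(3) by (simp add: power2_eq_square)
  qed
  have lo: "s * q \<le> a * q + b * (q + q0) + c * (q + 2 * q0) + d * (q + 2 * q0 + 1)"
    unfolding s_def by (simp add: algebra_simps)
  assume H: "a * q + b * (q + q0) + c * (q + 2 * q0) + d * (q + 2 * q0 + 1) \<le> t * (q + 2 * q0 + 1)"
  show "a + b + c + d \<le> t"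
  proof (rule ccontr)
    assume "\<not> ?thesis"
    hence "t + 1 \<le> s" unfolding s_def by simp
    hence "(t+1) * q \<le> s * q" by (rule mult_right_mono) simp
    moreover have "t * (q + 2 * q0 + 1) < (t+1) * q" using key by (simp add: algebra_simps)
    ultimately show False using H lo by linarith
  qed
next
  assume H: "a + b + c + d \<le> t"
  have "a * q + b * (q + q0) + c * (q + 2 * q0) + d * (q + 2 * q0 + 1) \<le> (a+b+c+d) * (q + 2 * q0 + 1)"
    by (simp add: algebra_simps)
  also have "\<dots> \<le> t * (q + 2 * q0 + 1)" using H by (rule mult_right_mono) simp
  finally show "a * q + b * (q + q0) + c * (q + 2 * q0) + d * (q + 2 * q0 + 1) \<le> t * (q + 2 * q0 + 1)" .
qed

end
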